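(* Let $\mathcal{G}=(\Delta,E)$ be a connected undirected graph, let $K=(k_{ij})\in\mathcal{M}^+(\mathcal{G})$, and let $C$ be a maximal clique of $\mathcal{G}$. Let $\mathcal{G}^*$ be a chordal extension of $\mathcal{G}$, and let $C^*_1,\dots,C^*_M$ be a perfect sequence of the maximal cliques of $\mathcal{G}^*$ with $C\subseteq C^*_1$. Put $S^*_m:=C^*_m\cap(C^*_1\cup\dots\cup C^*_{m-1})$ for $m=2,\dots,M$, $R^*_1:=C^*_1\setminus C$ and $R^*_m:=C^*_m\setminus S^*_m$ for $m=2,\dots,M$. Let $\delta_1,\dots,\delta_N$ ($N=|\Delta\setminus C|$) be an enumeration of $\Delta\setminus C$ that lists first all vertices of $R^*_M$ (in any order), then all vertices of $R^*_{M-1}$, and so on, ending with the vertices of $R^*_1$. Define symmetric matrices $K^{(0)}:=K$ and, for $i=1,\dots,N$, with $\delta:=\delta_i$, $m$ the index with $\delta\in R^*_m$, and $Q:=C^*_m\setminus\{\delta_1,\dots,\delta_i\}$, let $K^{(i)}$ be obtained from $K^{(i-1)}=(k^{(i-1)}_{ab})$ by replacing the block indexed by $Q\times Q$ with $$K^{(i-1)}_{QQ}-\bigl(k^{(i-1)}_{\delta\delta}\bigr)^{-1}K^{(i-1)}_{Q\delta}K^{(i-1)}_{\delta Q},$$ all other entries unchanged. Then $k^{(i-1)}_{\delta_i\delta_i}>0$ for every $i$ (so the procedure is well defined), and $$K^{(N)}_{CC}=\bigl((K^{-1})_{CC}\bigr)^{-1}.$$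
   Context: For a graph $\mathcal{G}=(\Delta,E)$, $\mathcal{M}^+(\mathcal{G})$ denotes the set of $|\Delta|\times|\Delta|$ real symmetric positive definite matrices $K=(k_{ij})$ with $k_{ij}=0$ whenever $i\neq j$ and $\{i,j\}\notin E$. For a matrix $A$ indexed by $\Delta$ and subsets $\Delta_1,\Delta_2\subseteq\Delta$, $A_{\Delta_1\Delta_2}$ denotes the submatrix with rows in $\Delta_1$ and columns in $\Delta_2$; $(K^{-1})_{CC}$ is the $C\times C$ submatrix of the inverse of $K$. A chordal extension of $\mathcal{G}$ is a chordal graph on the same vertex set $\Delta$ whose edge set contains $E$. A sequence $C^*_1,\dots,C^*_M$ of all maximal cliques of a chordal graph is a perfect sequence if for every $m=2,\dots,M$ there is $m'<m$ with $C^*_{m'}\supseteq C^*_m\cap(C^*_1\cup\dots\cup C^*_{m-1})$. A clique is a set of pairwise adjacent vertices. *)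

theory Defs
  imports Complex_Main
begin

definition graph :: "'v set \<Rightarrow> 'v set set \<Rightarrow> bool" where
  "graph D E \<longleftrightarrow> finite D \<and> (\<forall>e\<in>E. \<exists>a b. e = {a, b} \<and> a \<noteq> b \<and> a \<in> D \<and> b \<in> D)"

definition adj :: "'v set set \<Rightarrow> 'v \<Rightarrow> 'v \<Rightarrow> bool" where
  "adj E a b \<longleftrightarrow> {a, b} \<in> E"

definition connected_graph :: "'v set \<Rightarrow> 'v set set \<Rightarrow> bool" where
  "connected_graph D E \<longleftrightarrow>
     (\<forall>a\<in>D. \<forall>b\<in>D. (a, b) \<in> {(x, y). adj E x y}\<^sup>*)"

definition clique :: "'v set \<Rightarrow> 'v set set \<Rightarrow> 'v set \<Rightarrow> bool" where
  "clique D E C \<longleftrightarrow> C \<subseteq> D \<and> (\<forall>a\<in>C. \<forall>b\<in>C. a \<noteq> b \<longrightarrow> adj E a b)"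

definition maximal_clique :: "'v set \<Rightarrow> 'v set set \<Rightarrow> 'v set \<Rightarrow> bool" where
  "maximal_clique D E C \<longleftrightarrow> clique D E C \<and> (\<forall>C'. clique D E C' \<and> C \<subseteq> C' \<longrightarrow> C' = C)"

definition long_cycle :: "'v set \<Rightarrow> 'v set set \<Rightarrow> 'v list \<Rightarrow> bool" where
  "long_cycle D E vs \<longleftrightarrow> length vs \<ge> 4 \<and> distinct vs \<and> set vs \<subseteq> D \<and>
     (\<forall>i < length vs. adj E (vs ! i) (vs ! ((i + 1) mod length vs)))"

definition has_chord :: "'v set set \<Rightarrow> 'v list \<Rightarrow> bool" where
  "has_chord E vs \<longleftrightarrow> (\<exists>i < length vs. \<exists>j < length vs.
      i \<noteq> j \<and> j \<noteq> (i + 1) mod length vs \<and> i \<noteq> (j + 1) mod length vs \<and>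
      adj E (vs ! i) (vs ! j))"

definition chordal :: "'v set \<Rightarrow> 'v set set \<Rightarrow> bool" where
  "chordal D E \<longleftrightarrow> graph D E \<and> (\<forall>vs. long_cycle D E vs \<longrightarrow> has_chord E vs)"

definition chordal_extension :: "'v set \<Rightarrow> 'v set set \<Rightarrow> 'v set set \<Rightarrow> bool" where
  "chordal_extension D E E' \<longleftrightarrow> chordal D E' \<and> E \<subseteq> E'"

definition perfect_sequence :: "'v set \<Rightarrow> 'v set set \<Rightarrow> 'v set list \<Rightarrow> bool" where
  "perfect_sequence D E Cs \<longleftrightarrow> distinct Cs \<and> set Cs = {C. maximal_clique D E C} \<and>
     (\<forall>m. 1 \<le> m \<and> m < length Cs \<longrightarrow>
        (\<exists>m' < m. Cs ! m' \<supseteq> Cs ! m \<inter> (\<Union>j<m. Cs ! j)))"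

(* square matrices indexed by D are functions 'v => 'v => real (entries outside D irrelevant) *)
type_synonym 'v mat = "'v \<Rightarrow> 'v \<Rightarrow> real"

definition pos_def_on :: "'v set \<Rightarrow> 'v mat \<Rightarrow> bool" where
  "pos_def_on D K \<longleftrightarrow> (\<forall>a\<in>D. \<forall>b\<in>D. K a b = K b a) \<and>
     (\<forall>x :: 'v \<Rightarrow> real. (\<forall>v. v \<notin> D \<longrightarrow> x v = 0) \<longrightarrow> (\<exists>v. x v \<noteq> 0) \<longrightarrow>
        (\<Sum>a\<in>D. \<Sum>b\<in>D. x a * K a b * x b) > 0)"

definition M_plus :: "'v set \<Rightarrow> 'v set set \<Rightarrow> 'v mat set" where
  "M_plus D E = {K. pos_def_on D K \<and>
     (\<forall>a\<in>D. \<forall>b\<in>D. a \<noteq> b \<and> \<not> adj E a b \<longrightarrow> K a b = 0)}"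

definition inv_on :: "'v set \<Rightarrow> 'v mat \<Rightarrow> 'v mat" where
  "inv_on I A = (THE B. (\<forall>a b. a \<notin> I \<or> b \<notin> I \<longrightarrow> B a b = 0) \<and>
      (\<forall>a\<in>I. \<forall>b\<in>I. (\<Sum>c\<in>I. A a c * B c b) = (if a = b then 1 else 0)))"

definition sub_on :: "'v set \<Rightarrow> 'v mat \<Rightarrow> 'v mat" where
  "sub_on I A = (\<lambda>a b. if a \<in> I \<and> b \<in> I then A a b else 0)"

definition elim_step :: "'v set \<Rightarrow> 'v \<Rightarrow> 'v mat \<Rightarrow> 'v mat" where
  "elim_step Q d A = (\<lambda>a b. if a \<in> Q \<and> b \<in> Q then A a b - A a d * A d b / A d d else A a b)"

(* S*_m (0-indexed: m >= 1) *)
definition sep_set :: "'v set list \<Rightarrow> nat \<Rightarrow> 'v set" where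
  "sep_set Cs m = Cs ! m \<inter> (\<Union>j<m. Cs ! j)"

(* R*_1 = C*_1 - C,  R*_m = C*_m - S*_m  (0-indexed) *)
definition res_set :: "'v set \<Rightarrow> 'v set list \<Rightarrow> nat \<Rightarrow> 'v set" where
  "res_set C Cs m = (if m = 0 then Cs ! 0 - C else Cs ! m - sep_set Cs m)"

definition res_idx :: "'v set \<Rightarrow> 'v set list \<Rightarrow> 'v \<Rightarrow> nat" where
  "res_idx C Cs v = (THE m. m < length Cs \<and> v \<in> res_set C Cs m)"

end

theory Submission
  imports Defs
begin


definition rinv :: "'v set \<Rightarrow> 'v mat \<Rightarrow> 'v mat \<Rightarrow> bool" where
  "rinv V A P \<longleftrightarrow> (\<forall>a\<in>V. \<forall>b\<in>V. (\<Sum>c\<in>V. A a c * P c b) = (if a = b then 1 else 0))"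

definition schur :: "'v \<Rightarrow> 'v mat \<Rightarrow> 'v mat" where
  "schur d A = (\<lambda>a b. A a b - A a d * A d b / A d d)"

lemma pd_cong:
  assumes "\<forall>a\<in>V. \<forall>b\<in>V. A a b = B a b"
  shows "pos_def_on V A = pos_def_on V B"
  using assms unfolding pos_def_on_def by (auto cong: sum.cong)

lemma rinv_cong:
  assumes "\<forall>a\<in>V. \<forall>b\<in>V. A a b = B a b"
  shows "rinv V A P = rinv V B P"
  using assms unfolding rinv_def by (auto cong: sum.cong)

lemma pd_diag:
  assumes "finite V" "pos_def_on V A" "d \<in> V"
  shows "A d d > 0"
proof -
  define x where "x = (\<lambda>v. if v = d then 1 else (0::real))"
  have h1: "\<forall>v. v \<notin> V \<longrightarrow> x v = 0" using assms(3) unfolding x_def by auto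
  have h2: "\<exists>v. x v \<noteq> 0" unfolding x_def by (intro exI[of _ d]) simp
  have "(\<Sum>a\<in>V. \<Sum>b\<in>V. x a * A a b * x b) > 0"
    using assms(2) h1 h2 unfolding pos_def_on_def by blast
  moreover have "\<And>a. (\<Sum>b\<in>V. x a * A a b * x b) = x a * A a d"
    using assms(1,3) by (simp add: x_def sum.remove[of V d])
  moreover have "(\<Sum>a\<in>V. x a * A a d) = A d d"
    using assms(1,3) by (simp add: x_def sum.remove[of V d])
  ultimately show ?thesis by simp
qed

lemma pd_schur:
  assumes fin: "finite V'" and dn: "d \<notin> V'" and pd: "pos_def_on (insert d V') A"
  shows "pos_def_on V' (schur d A)"
proof -
  have sym: "\<forall>a\<in>insert d V'. \<forall>b\<in>insert d V'. A a b = A b a" using pd unfolding pos_def_on_def by blast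
  have Add: "A d d > 0" using pd_diag[OF _ pd] fin by simp
  show ?thesis unfolding pos_def_on_def
  proof (intro conjI allI impI ballI)
    fix a b assume "a \<in> V'" "b \<in> V'"
    then have "A a b = A b a" "A a d = A d a" "A d b = A b d" using sym \<open>a \<in> V'\<close> \<open>b \<in> V'\<close> by blast+
    then show "schur d A a b = schur d A b a" unfolding schur_def by (simp add: mult.commute)
  next
    fix x :: "'a \<Rightarrow> real"
    assume xs: "\<forall>v. v \<notin> V' \<longrightarrow> x v = 0" and xn: "\<exists>v. x v \<noteq> 0"
    define u where "u = (\<Sum>b\<in>V'. A d b * x b)"
    define t where "t = - u / A d d"
    define y where "y = x(d := t)"
    define Q where "Q = (\<Sum>a\<in>V'. \<Sum>b\<in>V'. x a * A a b * x b)"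
    have ys: "\<forall>v. v \<notin> insert d V' \<longrightarrow> y v = 0" using xs unfolding y_def by auto
    have yn: "\<exists>v. y v \<noteq> 0" using xn xs dn unfolding y_def by (metis fun_upd_other)
    have pos: "(\<Sum>a\<in>insert d V'. \<Sum>b\<in>insert d V'. y a * A a b * y b) > 0"
      using pd ys yn unfolding pos_def_on_def by blast
    have yV: "\<And>v. v \<in> V' \<Longrightarrow> y v = x v" using dn unfolding y_def by auto
    have u2: "(\<Sum>a\<in>V'. x a * A a d) = u" unfolding u_def
    proof (rule sum.cong)
      fix a assume "a \<in> V'"
      then have "A a d = A d a" using sym by blast
      then show "x a * A a d = A d a * x a" by simp
    qed simp
    have "(\<Sum>a\<in>insert d V'. \<Sum>b\<in>insert d V'. y a * A a b * y b)
        = t * A d d * t + t * u + (\<Sum>a\<in>V'. x a * A a d) * t + Q"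
    proof -
      have "(\<Sum>a\<in>insert d V'. \<Sum>b\<in>insert d V'. y a * A a b * y b)
        = (\<Sum>b\<in>insert d V'. y d * A d b * y b) + (\<Sum>a\<in>V'. \<Sum>b\<in>insert d V'. y a * A a b * y b)"
        using fin dn by simp
      also have "(\<Sum>b\<in>insert d V'. y d * A d b * y b) = t * A d d * t + t * u"
        using fin dn yV by (simp add: y_def u_def sum_distrib_left mult.assoc)
      also have "(\<Sum>a\<in>V'. \<Sum>b\<in>insert d V'. y a * A a b * y b)
          = (\<Sum>a\<in>V'. x a * A a d * t + (\<Sum>b\<in>V'. x a * A a b * x b))"
        using fin dn yV by (intro sum.cong) (auto simp: y_def)
      also have "\<dots> = (\<Sum>a\<in>V'. x a * A a d) * t + Q"
        by (simp add: sum.distrib sum_distrib_right Q_def)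
      finally show ?thesis by simp
    qed
    also have "\<dots> = Q - u * u / A d d"
      using Add unfolding u2 t_def by (simp add: field_simps power2_eq_square)
    finally have pos2: "Q - u * u / A d d > 0" using pos by simp
    have "(\<Sum>a\<in>V'. \<Sum>b\<in>V'. x a * schur d A a b * x b)
        = Q - (\<Sum>a\<in>V'. \<Sum>b\<in>V'. (x a * A a d) * (A d b * x b)) / A d d"
      unfolding schur_def Q_def
      by (simp add: algebra_simps sum_subtractf sum_divide_distrib sum.distrib)
    also have "(\<Sum>a\<in>V'. \<Sum>b\<in>V'. (x a * A a d) * (A d b * x b)) = u * u"
    proof -
      have "(\<Sum>a\<in>V'. \<Sum>b\<in>V'. (x a * A a d) * (A d b * x b)) = (\<Sum>a\<in>V'. x a * A a d) * (\<Sum>b\<in>V'. A d b * x b)"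
        by (simp add: sum_product)
      then show ?thesis using u2 unfolding u_def by simp
    qed
    finally show "(\<Sum>a\<in>V'. \<Sum>b\<in>V'. x a * schur d A a b * x b) > 0" using pos2 by simp
  qed
qed



lemma schur_rinv:
  assumes fin: "finite V" and dV: "d \<in> V" and Add: "A d d \<noteq> 0" and r: "rinv V A P"
  shows "rinv (V - {d}) (schur d A) P"
  unfolding rinv_def
proof (intro ballI)
  fix a b assume a: "a \<in> V - {d}" and b: "b \<in> V - {d}"
  have V: "V = insert d (V - {d})" using dV by blast
  have s1: "(\<Sum>c\<in>V. A a c * P c b) = (if a = b then 1 else 0)" using r a b unfolding rinv_def by blast
  have s2: "(\<Sum>c\<in>V. A d c * P c b) = 0" using r dV b unfolding rinv_def by auto
  have e1: "(\<Sum>c\<in>V. A a c * P c b) = A a d * P d b + (\<Sum>c\<in>V-{d}. A a c * P c b)"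
    using fin dV by (simp add: sum.remove)
  have e2: "(\<Sum>c\<in>V. A d c * P c b) = A d d * P d b + (\<Sum>c\<in>V-{d}. A d c * P c b)"
    using fin dV by (simp add: sum.remove)
  have "(\<Sum>c\<in>V-{d}. schur d A a c * P c b)
      = (\<Sum>c\<in>V-{d}. A a c * P c b) - A a d / A d d * (\<Sum>c\<in>V-{d}. A d c * P c b)"
    unfolding schur_def by (simp add: algebra_simps sum_subtractf sum_distrib_left sum_divide_distrib)
  also have "\<dots> = (if a = b then 1 else 0)"
  proof -
    have Y: "(\<Sum>c\<in>V-{d}. A d c * P c b) = - (A d d * P d b)" using s2 e2 by simp
    have "A a d / A d d * (- (A d d * P d b)) = - (A a d * P d b)" using Add by simp
    then show ?thesis unfolding Y using s1 e1 by simp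
  qed
  finally show "(\<Sum>c\<in>V-{d}. schur d A a c * P c b) = (if a = b then 1 else 0)" .
qed

lemma pd_rinv_exists:
  assumes "finite V" "pos_def_on V A"
  shows "\<exists>P. rinv V A P"
  using assms
proof (induction V arbitrary: A rule: finite_induct)
  case empty
  then show ?case by (simp add: rinv_def)
next
  case (insert d V' A)
  have Add: "A d d > 0" using pd_diag[OF _ insert.prems] insert.hyps by simp
  obtain T where T: "rinv V' (schur d A) T"
    using insert.IH[OF pd_schur[OF insert.hyps(1,2) insert.prems]] by blast
  define Z where "Z = (\<Sum>c\<in>V'. \<Sum>e\<in>V'. A d c * T c e * A e d)"
  define P where "P = (\<lambda>a b. if a = d \<and> b = d then 1 / A d d + Z / (A d d * A d d)
     else if a = d then - (\<Sum>c\<in>V'. A d c * T c b) / A d d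
     else if b = d then - (\<Sum>c\<in>V'. T a c * A c d) / A d d
     else T a b)"
  have Tr: "\<And>a e. a \<in> V' \<Longrightarrow> e \<in> V' \<Longrightarrow>
     (\<Sum>c\<in>V'. A a c * T c e) = (if a = e then 1 else 0) + A a d / A d d * (\<Sum>c\<in>V'. A d c * T c e)"
  proof -
    fix a e assume a: "a \<in> V'" and e: "e \<in> V'"
    have "(\<Sum>c\<in>V'. schur d A a c * T c e) = (if a = e then 1 else 0)" using T a e unfolding rinv_def by blast
    moreover have "(\<Sum>c\<in>V'. schur d A a c * T c e)
      = (\<Sum>c\<in>V'. A a c * T c e) - A a d / A d d * (\<Sum>c\<in>V'. A d c * T c e)"
      unfolding schur_def by (simp add: algebra_simps sum_subtractf sum_distrib_left sum_divide_distrib)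
    ultimately show "(\<Sum>c\<in>V'. A a c * T c e) = (if a = e then 1 else 0) + A a d / A d d * (\<Sum>c\<in>V'. A d c * T c e)"
      by simp
  qed
  have PV: "\<And>c b. c \<in> V' \<Longrightarrow> b \<in> V' \<Longrightarrow> P c b = T c b" using insert.hyps(2) unfolding P_def by auto
  have PVd: "\<And>c. c \<in> V' \<Longrightarrow> P c d = - (\<Sum>e\<in>V'. T c e * A e d) / A d d" using insert.hyps(2) unfolding P_def by auto
  have PdV: "\<And>b. b \<in> V' \<Longrightarrow> P d b = - (\<Sum>c\<in>V'. A d c * T c b) / A d d" using insert.hyps(2) unfolding P_def by auto
  have Pdd: "P d d = 1 / A d d + Z / (A d d * A d d)" unfolding P_def by simp
  have split: "\<And>a b. (\<Sum>c\<in>insert d V'. A a c * P c b) = A a d * P d b + (\<Sum>c\<in>V'. A a c * P c b)"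
    using insert.hyps by simp
  show ?case
  proof (intro exI[of _ P], unfold rinv_def, intro ballI)
    fix a b assume a: "a \<in> insert d V'" and b: "b \<in> insert d V'"
    show "(\<Sum>c\<in>insert d V'. A a c * P c b) = (if a = b then 1 else 0)"
    proof (cases "a = d")
      case ad: True
      show ?thesis
      proof (cases "b = d")
        case bd: True
        have "(\<Sum>c\<in>V'. A d c * P c d) = - Z / A d d"
        proof -
          have "(\<Sum>c\<in>V'. A d c * P c d) = (\<Sum>c\<in>V'. - (A d c * (\<Sum>e\<in>V'. T c e * A e d)) / A d d)"
            using PVd by (intro sum.cong) auto
          also have "\<dots> = - Z / A d d"
            unfolding Z_def by (simp add: sum_divide_distrib[symmetric] sum_negf sum_distrib_left mult.assoc)
          finally show ?thesis .
        qed
        moreover have "A d d * P d d = 1 + Z / A d d" using Pdd Add by (simp add: field_simps)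
        ultimately show ?thesis using ad bd split by simp
      next
        case bn: False
        then have bV: "b \<in> V'" using b by simp
        have "(\<Sum>c\<in>V'. A d c * P c b) = (\<Sum>c\<in>V'. A d c * T c b)"
          using PV bV by (intro sum.cong) auto
        then show ?thesis using ad bn split PdV[OF bV] Add by (simp add: field_simps)
      qed
    next
      case an: False
      then have aV: "a \<in> V'" using a by simp
      show ?thesis
      proof (cases "b = d")
        case bd: True
        have "(\<Sum>c\<in>V'. A a c * P c d) = - (\<Sum>c\<in>V'. A a c * (\<Sum>e\<in>V'. T c e * A e d)) / A d d"
        proof -
          have "(\<Sum>c\<in>V'. A a c * P c d) = (\<Sum>c\<in>V'. - (A a c * (\<Sum>e\<in>V'. T c e * A e d)) / A d d)"
            using PVd by (intro sum.cong) auto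
          then show ?thesis by (simp add: sum_divide_distrib[symmetric] sum_negf)
        qed
        also have "(\<Sum>c\<in>V'. A a c * (\<Sum>e\<in>V'. T c e * A e d)) = (\<Sum>e\<in>V'. (\<Sum>c\<in>V'. A a c * T c e) * A e d)"
          unfolding sum_distrib_left sum_distrib_right by (subst sum.swap) (simp add: mult.assoc)
        also have "\<dots> = (\<Sum>e\<in>V'. ((if a = e then 1 else 0) + A a d / A d d * (\<Sum>c\<in>V'. A d c * T c e)) * A e d)"
          using Tr aV by (intro sum.cong) auto
        also have "\<dots> = A a d + A a d / A d d * Z"
        proof -
          have "(\<Sum>e\<in>V'. ((if a = e then 1 else 0) + A a d / A d d * (\<Sum>c\<in>V'. A d c * T c e)) * A e d)
             = (\<Sum>e\<in>V'. A e d * (if a = e then 1 else 0)) + A a d / A d d * (\<Sum>e\<in>V'. (\<Sum>c\<in>V'. A d c * T c e) * A e d)"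
            by (simp add: algebra_simps sum.distrib sum_distrib_left)
          also have "(\<Sum>e\<in>V'. A e d * (if a = e then 1 else 0)) = A a d" using aV insert.hyps(1) by (simp add: sum.remove[of V' a], intro sum.neutral, auto)
          also have "(\<Sum>e\<in>V'. (\<Sum>c\<in>V'. A d c * T c e) * A e d) = Z"
            unfolding Z_def sum_distrib_right by (subst sum.swap) (simp add: mult.assoc)
          finally show ?thesis .
        qed
        finally have S: "(\<Sum>c\<in>V'. A a c * P c d) = - (A a d + A a d / A d d * Z) / A d d" .
        have "A a d * (1 / A d d + Z / (A d d * A d d)) + - (A a d + A a d / A d d * Z) / A d d = 0"
          using Add by (simp add: field_simps)
        then show ?thesis using an bd split[of a d] unfolding S Pdd by simp
      next
        case bn: False
        then have bV: "b \<in> V'" using b by simp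
        have "(\<Sum>c\<in>V'. A a c * P c b) = (\<Sum>c\<in>V'. A a c * T c b)"
          using PV bV by (intro sum.cong) auto
        then have S: "(\<Sum>c\<in>V'. A a c * P c b) = (if a = b then 1 else 0) + A a d / A d d * (\<Sum>c\<in>V'. A d c * T c b)"
          using Tr[OF aV bV] by simp
        have "A a d * (- (\<Sum>c\<in>V'. A d c * T c b) / A d d) + ((if a = b then 1 else 0) + A a d / A d d * (\<Sum>c\<in>V'. A d c * T c b)) = (if a = b then 1 else (0::real))"
          by (simp add: field_simps)
        then show ?thesis using split[of a b] unfolding S PdV[OF bV] by simp
      qed
    qed
  qed
qed



lemma adj_sym: "adj E a b = adj E b a"
  unfolding adj_def by (simp add: insert_commute)

lemma clique_ext:
  assumes "finite D" "clique D Es X"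
  shows "\<exists>M. maximal_clique D Es M \<and> X \<subseteq> M"
proof -
  let ?A = "{Y. clique D Es Y \<and> X \<subseteq> Y}"
  have "?A \<subseteq> Pow D" unfolding clique_def by auto
  then have fin: "finite ?A" using assms(1) finite_subset by blast
  have "X \<in> ?A" using assms(2) by simp
  from finite_has_maximal2[OF fin this] obtain M where M: "M \<in> ?A" "X \<subseteq> M"
    "\<forall>b\<in>?A. M \<subseteq> b \<longrightarrow> M = b" by blast
  have "maximal_clique D Es M" unfolding maximal_clique_def
  proof (intro conjI allI impI)
    show "clique D Es M" using M(1) by simp
    fix C' assume "clique D Es C' \<and> M \<subseteq> C'"
    then show "C' = M" using M by auto
  qed
  then show ?thesis using M(2) by blast
qed

lemma delta_r: "finite V \<Longrightarrow> b \<in> V \<Longrightarrow> (\<Sum>c\<in>V. f c * (if c = b then 1 else 0)) = (f b :: real)"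
proof -
  assume "finite V" "b \<in> V"
  have "(\<Sum>c\<in>V. f c * (if c = b then 1 else 0)) = (\<Sum>c\<in>V. if c = b then f c else 0)"
    by (intro sum.cong) auto
  then show ?thesis using \<open>finite V\<close> \<open>b \<in> V\<close> by simp
qed

lemma delta_l: "finite V \<Longrightarrow> b \<in> V \<Longrightarrow> (\<Sum>c\<in>V. (if b = c then 1 else 0) * f c) = (f b :: real)"
proof -
  assume "finite V" "b \<in> V"
  have "(\<Sum>c\<in>V. (if b = c then 1 else 0) * f c) = (\<Sum>c\<in>V. if b = c then f c else 0)"
    by (intro sum.cong) auto
  then show ?thesis using \<open>finite V\<close> \<open>b \<in> V\<close> by simp
qed

lemma sum_assoc3: "(\<Sum>c\<in>V. (f c :: real) * (\<Sum>e\<in>W. g c e * h e)) = (\<Sum>e\<in>W. (\<Sum>c\<in>V. f c * g c e) * h e)"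
  unfolding sum_distrib_left sum_distrib_right by (subst sum.swap) (simp add: mult.assoc)

lemma rinv_unique:
  assumes fin: "finite D" and pd: "pos_def_on D K" and r1: "rinv D K B1" and r2: "rinv D K B2"
    and a: "a \<in> D" and b: "b \<in> D"
  shows "B1 a b = B2 a b"
proof -
  define x where "x = (\<lambda>c. if c \<in> D then B1 c b - B2 c b else 0)"
  have Kx: "\<And>a. a \<in> D \<Longrightarrow> (\<Sum>c\<in>D. K a c * x c) = 0"
  proof -
    fix a assume aD: "a \<in> D"
    have "(\<Sum>c\<in>D. K a c * x c) = (\<Sum>c\<in>D. K a c * B1 c b) - (\<Sum>c\<in>D. K a c * B2 c b)"
      unfolding x_def by (simp add: sum_subtractf[symmetric] algebra_simps)
    then show "(\<Sum>c\<in>D. K a c * x c) = 0" using r1 r2 aD b unfolding rinv_def by simp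
  qed
  have "(\<Sum>a\<in>D. \<Sum>c\<in>D. x a * K a c * x c) = (\<Sum>a\<in>D. x a * (\<Sum>c\<in>D. K a c * x c))"
    by (simp add: sum_distrib_left mult.assoc)
  also have "\<dots> = 0" using Kx by simp
  finally have z: "(\<Sum>a\<in>D. \<Sum>c\<in>D. x a * K a c * x c) = 0" .
  have "\<forall>v. x v = 0"
  proof (rule ccontr)
    assume "\<not> (\<forall>v. x v = 0)"
    then have "\<exists>v. x v \<noteq> 0" by blast
    moreover have "\<forall>v. v \<notin> D \<longrightarrow> x v = 0" unfolding x_def by simp
    ultimately have "(\<Sum>a\<in>D. \<Sum>c\<in>D. x a * K a c * x c) > 0" using pd unfolding pos_def_on_def by blast
    then show False using z by simp
  qed
  then have "x a = 0" by blast
  then show ?thesis using a unfolding x_def by simp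
qed

lemma rinv_sym:
  assumes fin: "finite D" and pd: "pos_def_on D K" and r: "rinv D K P"
    and a: "a \<in> D" and b: "b \<in> D"
  shows "P a b = P b a"
proof -
  have symK: "\<And>x y. x \<in> D \<Longrightarrow> y \<in> D \<Longrightarrow> K x y = K y x" using pd unfolding pos_def_on_def by blast
  have "(\<Sum>x\<in>D. P x a * (\<Sum>y\<in>D. K x y * P y b)) = (\<Sum>x\<in>D. P x a * (if x = b then 1 else 0))"
    using r b unfolding rinv_def by (intro sum.cong) auto
  also have "\<dots> = P b a" using fin b by (rule delta_r)
  finally have 1: "(\<Sum>x\<in>D. P x a * (\<Sum>y\<in>D. K x y * P y b)) = P b a" .
  have "(\<Sum>x\<in>D. P x a * (\<Sum>y\<in>D. K x y * P y b)) = (\<Sum>y\<in>D. (\<Sum>x\<in>D. P x a * K x y) * P y b)"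
    by (rule sum_assoc3)
  also have "\<dots> = (\<Sum>y\<in>D. (if y = a then 1 else 0) * P y b)"
  proof (rule sum.cong)
    fix y assume y: "y \<in> D"
    have "(\<Sum>x\<in>D. P x a * K x y) = (\<Sum>x\<in>D. K y x * P x a)"
      using symK y by (intro sum.cong) (auto simp: mult.commute)
    also have "\<dots> = (if y = a then 1 else 0)" using r y a unfolding rinv_def by blast
    finally show "(\<Sum>x\<in>D. P x a * K x y) * P y b = (if y = a then 1 else 0) * P y b" by simp
  qed simp
  also have "\<dots> = P a b" using delta_l[OF fin a, of "\<lambda>y. P y b"] by (simp add: eq_commute[of _ a])
  finally show ?thesis using 1 by simp
qed



theorem mainTheorem1:
  fixes D :: "'v set" and E Es :: "'v set set" and K :: "'v mat" and C :: "'v set"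
    and Cs :: "'v set list" and ds :: "'v list" and Ks :: "nat \<Rightarrow> 'v mat"
  assumes G: "graph D E" and conn: "connected_graph D E"
    and K: "K \<in> M_plus D E"
    and Cmax: "maximal_clique D E C"
    and ext: "chordal_extension D E Es"
    and perf: "perfect_sequence D Es Cs"
    and C1: "Cs \<noteq> []" "C \<subseteq> Cs ! 0"
  assumes ds: "distinct ds" "set ds = D - C"
    and ds_order: "\<forall>i j. i < j \<and> j < length ds \<longrightarrow> res_idx C Cs (ds ! j) \<le> res_idx C Cs (ds ! i)"
    and Ks0: "Ks 0 = K"
    and KsSuc: "\<forall>i < length ds. Ks (Suc i) =
        elim_step (Cs ! res_idx C Cs (ds ! i) - set (take (Suc i) ds)) (ds ! i) (Ks i)"
  shows "(\<forall>i < length ds. Ks i (ds ! i) (ds ! i) > 0) \<and>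
         (\<forall>a\<in>C. \<forall>b\<in>C. Ks (length ds) a b = inv_on C (sub_on C (inv_on D K)) a b)"
proof -
  have finD: "finite D" using G unfolding graph_def by blast
  have pdK: "pos_def_on D K" using K unfolding M_plus_def by blast
  have zK: "\<forall>a\<in>D. \<forall>b\<in>D. a \<noteq> b \<and> \<not> adj E a b \<longrightarrow> K a b = 0" using K unfolding M_plus_def by blast
  have EEs: "E \<subseteq> Es" using ext unfolding chordal_extension_def by blast
  have CD: "C \<subseteq> D" using Cmax unfolding maximal_clique_def clique_def by blast
  have setCs: "set Cs = {X. maximal_clique D Es X}" using perf unfolding perfect_sequence_def by blast
  have perfR: "\<And>m. 1 \<le> m \<Longrightarrow> m < length Cs \<Longrightarrow> \<exists>m'<m. Cs ! m \<inter> (\<Union>j<m. Cs ! j) \<subseteq> Cs ! m'"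
    using perf unfolding perfect_sequence_def by blast
  have CsD: "\<And>j. j < length Cs \<Longrightarrow> Cs ! j \<subseteq> D"
    using setCs nth_mem unfolding maximal_clique_def clique_def by blast
  have Csclq: "\<And>j a b. j < length Cs \<Longrightarrow> a \<in> Cs ! j \<Longrightarrow> b \<in> Cs ! j \<Longrightarrow> a \<noteq> b \<Longrightarrow> adj Es a b"
    using setCs nth_mem unfolding maximal_clique_def clique_def by blast
  have inCs: "\<And>X. clique D Es X \<Longrightarrow> \<exists>j<length Cs. X \<subseteq> Cs ! j"
  proof -
    fix X assume "clique D Es X"
    then obtain M where "maximal_clique D Es M" "X \<subseteq> M" using clique_ext finD by blast
    then show "\<exists>j<length Cs. X \<subseteq> Cs ! j" using setCs by (metis in_set_conv_nth mem_Collect_eq)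
  qed
  have res: "\<And>v. v \<in> D - C \<Longrightarrow> res_idx C Cs v < length Cs \<and> v \<in> Cs ! res_idx C Cs v \<and>
      (\<forall>j < res_idx C Cs v. v \<notin> Cs ! j)"
  proof -
    fix v assume v: "v \<in> D - C"
    have "clique D Es {v}" using v unfolding clique_def by auto
    then obtain j where j: "j < length Cs" "v \<in> Cs ! j" using inCs by blast
    define m0 where "m0 = (LEAST j. j < length Cs \<and> v \<in> Cs ! j)"
    have m0: "m0 < length Cs \<and> v \<in> Cs ! m0" unfolding m0_def by (rule LeastI[of _ j]) (use j in blast)
    have m0l: "\<And>j. j < m0 \<Longrightarrow> v \<notin> Cs ! j"
      using m0 not_less_Least[of _ "\<lambda>j. j < length Cs \<and> v \<in> Cs ! j"] unfolding m0_def
      by (meson order.strict_trans)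
    have "res_idx C Cs v = m0" unfolding res_idx_def
    proof (rule the_equality)
      show "m0 < length Cs \<and> v \<in> res_set C Cs m0"
        using m0 m0l v unfolding res_set_def sep_set_def by auto
    next
      fix m assume mm: "m < length Cs \<and> v \<in> res_set C Cs m"
      then have vm: "v \<in> Cs ! m" unfolding res_set_def by (auto split: if_splits)
      have ml: "\<forall>j<m. v \<notin> Cs ! j" using mm unfolding res_set_def sep_set_def by (auto split: if_splits)
      have "m0 \<le> m" unfolding m0_def using mm vm by (intro Least_le) blast
      moreover have "\<not> m0 < m" using ml m0 by blast
      ultimately show "m = m0" by simp
    qed
    then show "res_idx C Cs v < length Cs \<and> v \<in> Cs ! res_idx C Cs v \<and> (\<forall>j < res_idx C Cs v. v \<notin> Cs ! j)"
      using m0 m0l by simp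
  qed
  define V where "V = (\<lambda>i. D - set (take i ds))"
  have dsD: "\<And>i. i < length ds \<Longrightarrow> ds ! i \<in> D - C" using ds(2) nth_mem by blast
  have VSuc: "\<And>i. i < length ds \<Longrightarrow> V (Suc i) = V i - {ds ! i}"
    unfolding V_def by (auto simp: take_Suc_conv_app_nth)
  have dV: "\<And>i. i < length ds \<Longrightarrow> ds ! i \<in> V i"
  proof -
    fix i assume i: "i < length ds"
    have "ds ! i \<notin> set (take i ds)"
    proof
      assume "ds ! i \<in> set (take i ds)"
      then obtain k where "k < length (take i ds)" "take i ds ! k = ds ! i" by (metis in_set_conv_nth)
      then have "k < i" "ds ! k = ds ! i" by auto
      then show False using ds(1) i nth_eq_iff_index_eq by fastforce
    qed
    then show "ds ! i \<in> V i" using dsD[OF i] unfolding V_def by blast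
  qed
  have finV: "\<And>i. finite (V i)" unfolding V_def using finD by simp
  have comb: "\<And>i a. i < length ds \<Longrightarrow> a \<in> V (Suc i) \<Longrightarrow> adj Es a (ds ! i) \<Longrightarrow>
      a \<in> Cs ! res_idx C Cs (ds ! i)"
  proof -
    fix i a assume i: "i < length ds" and a: "a \<in> V (Suc i)" and ad: "adj Es a (ds ! i)"
    define d where "d = ds ! i"
    define m where "m = res_idx C Cs d"
    have rd: "m < length Cs" "d \<in> Cs ! m" "\<forall>j<m. d \<notin> Cs ! j" using res[OF dsD[OF i]] unfolding m_def d_def by auto
    have aD: "a \<in> D" using a unfolding V_def by blast
    have ant: "a \<notin> set (take (Suc i) ds)" using a unfolding V_def by blast
    have dnt: "d \<in> set (take (Suc i) ds)" unfolding d_def using i by (simp add: take_Suc_conv_app_nth)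
    have ad2: "a \<noteq> d" using ant dnt by blast
    have aearly: "\<exists>k. k \<le> m \<and> k < length Cs \<and> a \<in> Cs ! k"
    proof (cases "a \<in> C")
      case True then show ?thesis using C1 by (intro exI[of _ 0]) auto
    next
      case False
      then have "a \<in> set ds" using ds(2) aD by blast
      then obtain k where k: "k < length ds" "ds ! k = a" by (metis in_set_conv_nth)
      have "\<not> k < Suc i"
      proof
        assume "k < Suc i"
        then have "ds ! k \<in> set (take (Suc i) ds)" using k(1) by (metis in_set_conv_nth length_take min_less_iff_conj nth_take)
        then show False using k ant by simp
      qed
      then have "i < k" by simp
      then have "res_idx C Cs a \<le> m" using ds_order k unfolding m_def d_def by blast
      then show ?thesis using res[OF dsD[OF k(1)]] k(2) by blast
    qed
    have "clique D Es {a, d}" unfolding clique_def using aD dsD[OF i] ad ad2 adj_sym[of Es a d] unfolding d_def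
      by auto
    then obtain j0 where j0: "j0 < length Cs" "{a, d} \<subseteq> Cs ! j0" using inCs by blast
    have "\<forall>j. j < length Cs \<longrightarrow> a \<in> Cs ! j \<longrightarrow> d \<in> Cs ! j \<longrightarrow> a \<in> Cs ! m"
    proof (intro allI)
      fix j show "j < length Cs \<longrightarrow> a \<in> Cs ! j \<longrightarrow> d \<in> Cs ! j \<longrightarrow> a \<in> Cs ! m"
      proof (induction j rule: less_induct)
        case (less j)
        show ?case
        proof (intro impI)
          assume jl: "j < length Cs" and aj: "a \<in> Cs ! j" and dj: "d \<in> Cs ! j"
          have "m \<le> j" using rd(3) dj by (meson not_less)
          show "a \<in> Cs ! m"
          proof (cases "j = m")
            case True then show ?thesis using aj by simp
          next
            case False
            then have mj: "m < j" using \<open>m \<le> j\<close> by simp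
            obtain k where k: "k \<le> m" "k < length Cs" "a \<in> Cs ! k" using aearly by blast
            have "a \<in> (\<Union>j'<j. Cs ! j')" using k mj by auto
            moreover have "d \<in> (\<Union>j'<j. Cs ! j')" using rd mj by auto
            ultimately obtain j' where j': "j' < j" "Cs ! j \<inter> (\<Union>j'<j. Cs ! j') \<subseteq> Cs ! j'"
              using perfR[of j] mj jl aj dj by auto
            have "a \<in> Cs ! j'" "d \<in> Cs ! j'" using j' aj dj \<open>a \<in> (\<Union>j'<j. Cs ! j')\<close> \<open>d \<in> (\<Union>j'<j. Cs ! j')\<close> by auto
            then show ?thesis using less.IH[OF j'(1)] j' jl by simp
          qed
        qed
      qed
    qed
    then show "a \<in> Cs ! res_idx C Cs (ds ! i)" using j0 unfolding m_def d_def by auto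
  qed

  obtain P' where P': "rinv D K P'" using pd_rinv_exists[OF finD pdK] by blast
  define pred where "pred = (\<lambda>B. (\<forall>a b. a \<notin> D \<or> b \<notin> D \<longrightarrow> B a b = 0) \<and>
      (\<forall>a\<in>D. \<forall>b\<in>D. (\<Sum>c\<in>D. K a c * B c b) = (if a = b then 1 else 0)))"
  define P0 where "P0 = (\<lambda>a b. if a \<in> D \<and> b \<in> D then P' a b else 0)"
  have pred0: "pred P0"
  proof -
    have "rinv D K P0" using P' unfolding rinv_def P0_def by (auto cong: sum.cong)
    then show ?thesis unfolding pred_def rinv_def P0_def by auto
  qed
  have predU: "\<And>B. pred B \<Longrightarrow> B = P0"
  proof -
    fix B assume pB: "pred B"
    have rB: "rinv D K B" using pB unfolding pred_def rinv_def by blast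
    have r0: "rinv D K P0" using pred0 unfolding pred_def rinv_def by blast
    show "B = P0"
    proof (intro HOL.ext)
      fix a b show "B a b = P0 a b"
      proof (cases "a \<in> D \<and> b \<in> D")
        case True then show ?thesis using rinv_unique[OF finD pdK rB r0] by blast
      next
        case False then show ?thesis using pB pred0 unfolding pred_def by auto
      qed
    qed
  qed
  define P where "P = inv_on D K"
  have "inv_on D K = (THE B. pred B)" unfolding inv_on_def pred_def by (rule refl)
  then have PP0: "P = P0" unfolding P_def using the_equality[of pred P0, OF pred0 predU] by simp
  have rP: "rinv D K P" using pred0 unfolding PP0 pred_def rinv_def by blast
  have P0out: "\<And>a b. a \<notin> D \<or> b \<notin> D \<Longrightarrow> P a b = 0" unfolding PP0 P0_def by auto
  have Psym: "\<And>a b. a \<in> D \<Longrightarrow> b \<in> D \<Longrightarrow> P a b = P b a" using rinv_sym[OF finD pdK rP] by blast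
  have inv: "\<And>i. i \<le> length ds \<Longrightarrow> pos_def_on (V i) (Ks i) \<and> rinv (V i) (Ks i) P \<and>
      (\<forall>a\<in>V i. \<forall>b\<in>V i. a \<noteq> b \<and> \<not> adj Es a b \<longrightarrow> Ks i a b = 0)"
  proof -
    fix i show "i \<le> length ds \<Longrightarrow> pos_def_on (V i) (Ks i) \<and> rinv (V i) (Ks i) P \<and>
      (\<forall>a\<in>V i. \<forall>b\<in>V i. a \<noteq> b \<and> \<not> adj Es a b \<longrightarrow> Ks i a b = 0)"
    proof (induction i)
      case 0
      have V0: "V 0 = D" unfolding V_def by simp
      have "\<forall>a\<in>D. \<forall>b\<in>D. a \<noteq> b \<and> \<not> adj Es a b \<longrightarrow> K a b = 0"
        using zK EEs unfolding adj_def by blast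
      then show ?case using pdK rP unfolding V0 Ks0 by blast
    next
      case (Suc i)
      then have i: "i < length ds" by simp
      have IH: "pos_def_on (V i) (Ks i)" "rinv (V i) (Ks i) P"
        "\<forall>a\<in>V i. \<forall>b\<in>V i. a \<noteq> b \<and> \<not> adj Es a b \<longrightarrow> Ks i a b = 0" using Suc.IH i by auto
      define d where "d = ds ! i"
      define A where "A = Ks i"
      define m where "m = res_idx C Cs d"
      have dVi: "d \<in> V i" using dV[OF i] unfolding d_def .
      have VS: "V (Suc i) = V i - {d}" using VSuc[OF i] unfolding d_def .
      have Add: "A d d > 0" using pd_diag[OF finV IH(1) dVi] unfolding A_def .
      have mlt: "m < length Cs" using res[OF dsD[OF i]] unfolding m_def d_def by blast
      have KS: "Ks (Suc i) = elim_step (Cs ! m - set (take (Suc i) ds)) d A"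
        using KsSuc i unfolding A_def m_def d_def by blast
      have VSV: "\<And>a. a \<in> V (Suc i) \<Longrightarrow> a \<in> V i \<and> a \<noteq> d" unfolding VS by blast
      have zero1: "\<And>a. a \<in> V (Suc i) \<Longrightarrow> a \<notin> Cs ! m \<Longrightarrow> A a d = 0"
      proof -
        fix a assume a: "a \<in> V (Suc i)" "a \<notin> Cs ! m"
        then have "\<not> adj Es a d" using comb[OF i a(1)] unfolding m_def d_def by blast
        then show "A a d = 0" using IH(3) VSV[OF a(1)] dVi unfolding A_def by blast
      qed
      have zero2: "\<And>b. b \<in> V (Suc i) \<Longrightarrow> b \<notin> Cs ! m \<Longrightarrow> A d b = 0"
      proof -
        fix b assume b: "b \<in> V (Suc i)" "b \<notin> Cs ! m"
        then have "\<not> adj Es d b" using comb[OF i b(1)] adj_sym[of Es d b] unfolding m_def d_def by blast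
        then show "A d b = 0" using IH(3) VSV[OF b(1)] dVi unfolding A_def by metis
      qed
      have agree: "\<forall>a\<in>V (Suc i). \<forall>b\<in>V (Suc i). Ks (Suc i) a b = schur d A a b"
      proof (intro ballI)
        fix a b assume a: "a \<in> V (Suc i)" and b: "b \<in> V (Suc i)"
        have nt: "a \<notin> set (take (Suc i) ds)" "b \<notin> set (take (Suc i) ds)" using a b unfolding V_def by auto
        show "Ks (Suc i) a b = schur d A a b"
        proof (cases "a \<in> Cs ! m \<and> b \<in> Cs ! m")
          case True then show ?thesis unfolding KS elim_step_def schur_def using nt by simp
        next
          case False
          then have "A a d * A d b = 0" using zero1[OF a] zero2[OF b] by auto
          then show ?thesis unfolding KS elim_step_def schur_def by auto
        qed
      qed
      have Vins: "V i = insert d (V (Suc i))" using VS dVi by blast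
      have dnot: "d \<notin> V (Suc i)" using VS by blast
      have pdS: "pos_def_on (V (Suc i)) (Ks (Suc i))"
        using pd_cong[OF agree] pd_schur[OF finV dnot] IH(1) Vins unfolding A_def by simp
      have rS: "rinv (V (Suc i)) (Ks (Suc i)) P"
        using rinv_cong[OF agree] schur_rinv[OF finV dVi _ IH(2)] Add VS unfolding A_def by simp
      have zS: "\<forall>a\<in>V (Suc i). \<forall>b\<in>V (Suc i). a \<noteq> b \<and> \<not> adj Es a b \<longrightarrow> Ks (Suc i) a b = 0"
      proof (intro ballI impI)
        fix a b assume a: "a \<in> V (Suc i)" and b: "b \<in> V (Suc i)" and ab: "a \<noteq> b \<and> \<not> adj Es a b"
        have Aab: "A a b = 0" using IH(3) VSV[OF a] VSV[OF b] ab unfolding A_def by blast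
        have "A a d * A d b = 0"
        proof (rule ccontr)
          assume "A a d * A d b \<noteq> 0"
          then have "A a d \<noteq> 0" "A d b \<noteq> 0" by auto
          then have "a \<in> Cs ! m" "b \<in> Cs ! m" using zero1[OF a] zero2[OF b] by auto
          then have "adj Es a b" using Csclq[OF mlt] ab by blast
          then show False using ab by blast
        qed
        then show "Ks (Suc i) a b = 0" using agree a b Aab unfolding schur_def by simp
      qed
      show ?case using pdS rS zS by blast
    qed
  qed
  define N where "N = length ds"
  have VN: "V N = C" unfolding V_def N_def using ds(2) CD by auto
  have invN: "pos_def_on C (Ks N)" "rinv C (Ks N) P" using inv[of N] VN unfolding N_def by auto
  have finC: "finite C" using finD CD finite_subset by blast
  have part1: "\<forall>i < length ds. Ks i (ds ! i) (ds ! i) > 0"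
  proof (intro allI impI)
    fix i assume i: "i < length ds"
    show "Ks i (ds ! i) (ds ! i) > 0" using pd_diag[OF finV _ dV[OF i]] inv[of i] i by simp
  qed
  define S where "S = Ks N"
  have Ssym: "\<And>a b. a \<in> C \<Longrightarrow> b \<in> C \<Longrightarrow> S a b = S b a" using invN(1) unfolding S_def pos_def_on_def by blast
  have rS: "\<And>a b. a \<in> C \<Longrightarrow> b \<in> C \<Longrightarrow> (\<Sum>c\<in>C. S a c * P c b) = (if a = b then 1 else 0)"
    using invN(2) unfolding rinv_def S_def by blast
  define X where "X = (\<lambda>a b. if a \<in> C \<and> b \<in> C then S a b else 0)"
  have "inv_on C (sub_on C P) = X" unfolding inv_on_def
  proof (rule the_equality)
    show "(\<forall>a b. a \<notin> C \<or> b \<notin> C \<longrightarrow> X a b = 0) \<and>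
      (\<forall>a\<in>C. \<forall>b\<in>C. (\<Sum>c\<in>C. sub_on C P a c * X c b) = (if a = b then 1 else 0))"
    proof (intro conjI allI impI ballI)
      fix a b show "a \<notin> C \<or> b \<notin> C \<Longrightarrow> X a b = 0" unfolding X_def by auto
    next
      fix a b assume a: "a \<in> C" and b: "b \<in> C"
      have "(\<Sum>c\<in>C. sub_on C P a c * X c b) = (\<Sum>c\<in>C. S b c * P c a)"
      proof (rule sum.cong)
        fix c assume c: "c \<in> C"
        have "P a c = P c a" using Psym a c CD by blast
        moreover have "S c b = S b c" using Ssym b c by blast
        ultimately show "sub_on C P a c * X c b = S b c * P c a"
          unfolding sub_on_def X_def using a b c by simp
      qed simp
      also have "\<dots> = (if a = b then 1 else 0)" using rS[OF b a] by simp
      finally show "(\<Sum>c\<in>C. sub_on C P a c * X c b) = (if a = b then 1 else 0)" .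
    qed
  next
    fix B assume B: "(\<forall>a b. a \<notin> C \<or> b \<notin> C \<longrightarrow> B a b = 0) \<and>
      (\<forall>a\<in>C. \<forall>b\<in>C. (\<Sum>c\<in>C. sub_on C P a c * B c b) = (if a = b then 1 else 0))"
    show "B = X"
    proof (intro HOL.ext)
      fix a b show "B a b = X a b"
      proof (cases "a \<in> C \<and> b \<in> C")
        case False then show ?thesis using B unfolding X_def by auto
      next
        case True
        then have a: "a \<in> C" and b: "b \<in> C" by auto
        have "(\<Sum>c\<in>C. S a c * (\<Sum>e\<in>C. P c e * B e b)) = (\<Sum>c\<in>C. S a c * (if c = b then 1 else 0))"
          using B b unfolding sub_on_def by (intro sum.cong) auto
        also have "\<dots> = S a b" using delta_r[OF finC b] .
        finally have 1: "(\<Sum>c\<in>C. S a c * (\<Sum>e\<in>C. P c e * B e b)) = S a b" .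
        have "(\<Sum>c\<in>C. S a c * (\<Sum>e\<in>C. P c e * B e b)) = (\<Sum>e\<in>C. (\<Sum>c\<in>C. S a c * P c e) * B e b)"
          by (rule sum_assoc3)
        also have "\<dots> = (\<Sum>e\<in>C. (if a = e then 1 else 0) * B e b)"
          using rS a by (intro sum.cong) auto
        also have "\<dots> = B a b" using delta_l[OF finC a] .
        finally show ?thesis using 1 True unfolding X_def by simp
      qed
    qed
  qed
  then show ?thesis using part1 unfolding X_def S_def N_def P_def by simp
qed

end
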